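(* Let $C_1>0$, $C_2>0$. For $\xi\in\mathbb{C}$ write $\xi=r_1e^{i\theta_1}$ and $\xi-C_1=r_2e^{i\theta_2}$ with $r_1,r_2\ge0$, $\theta_1,\theta_2\in[0,2\pi)$, and define $\sqrt{\xi(\xi-C_1)}:=(r_1r_2)^{1/2}e^{i(\theta_1+\theta_2)/2}$. Define $$R^D(\xi):=\frac{C_2}{\sqrt{\xi(\xi-C_1)}-C_2}.$$ Let $\xi_p:=\frac{C_1+\sqrt{C_1^2+4C_2^2}}{2}$, $\psi(u):=\frac{C_2\sqrt{u(C_1-u)}}{\pi[C_2^2+u(C_1-u)]}$ for $u\in[0,C_1]$, and $r:=\frac{2C_2\sqrt{\xi_p(\xi_p-C_1)}}{2\xi_p-C_1}$. Then $R^D$ is analytic in $\mathbb{C}\setminus([0,C_1]\cup\{\xi_p\})$, has a simple pole at $\xi_p$ with residue $r$, $-R^D$ maps the upper half plane into the upper half plane, and for every $\xi\in\mathbb{C}\setminus[0,\xi_p]$ $$R^D(\xi)=\int_0^{C_1}\frac{\psi(u)\,du}{\xi-u}+\frac{r}{\xi-\xi_p}.$$ Moreover $\int_0^{C_1}\frac{\psi(u)}{u}\,du+\frac{r}{\xi_p}=1$.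
   Context: In the JKD model $C_2=FK_0/\nu$ and $C_1=4C_2FK_0/\Lambda^2$, and $R^D(\xi)=-s\,(F/\nu)K^D(is)$ with $s=-i\omega$, $\xi=-1/s$, where $K^D(\omega)=K_0/(\sqrt{1-iC_1\omega}-iC_2\omega)$. *)

theory Defs
  imports "HOL-Analysis.Analysis"
begin

definition arg02 :: "complex \<Rightarrow> real" where
  "arg02 z = (if Arg z \<ge> 0 then Arg z else Arg z + 2 * pi)"

definition sqrtD :: "real \<Rightarrow> complex \<Rightarrow> complex" where
  "sqrtD C1 \<xi> = complex_of_real (sqrt (norm \<xi> * norm (\<xi> - complex_of_real C1)))
                 * cis ((arg02 \<xi> + arg02 (\<xi> - complex_of_real C1)) / 2)"

definition RD :: "real \<Rightarrow> real \<Rightarrow> complex \<Rightarrow> complex" where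
  "RD C1 C2 \<xi> = complex_of_real C2 / (sqrtD C1 \<xi> - complex_of_real C2)"

definition xi_p :: "real \<Rightarrow> real \<Rightarrow> real" where
  "xi_p C1 C2 = (C1 + sqrt (C1\<^sup>2 + 4 * C2\<^sup>2)) / 2"

definition psiD :: "real \<Rightarrow> real \<Rightarrow> real \<Rightarrow> real" where
  "psiD C1 C2 u = C2 * sqrt (u * (C1 - u)) / (pi * (C2\<^sup>2 + u * (C1 - u)))"

definition resD :: "real \<Rightarrow> real \<Rightarrow> real" where
  "resD C1 C2 = 2 * C2 * sqrt (xi_p C1 C2 * (xi_p C1 C2 - C1)) / (2 * xi_p C1 C2 - C1)"

definition simple_pole_res :: "(complex \<Rightarrow> complex) \<Rightarrow> complex \<Rightarrow> complex \<Rightarrow> bool" where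
  "simple_pole_res f z r \<longleftrightarrow> r \<noteq> 0 \<and>
     (\<exists>e>0. \<exists>g. g holomorphic_on ball z e \<and>
        (\<forall>w\<in>ball z e - {z}. f w = r / (w - z) + g w))"

end

theory Submission
  imports Defs
begin


lemma csqrt_rcis: "csqrt z = rcis (sqrt (norm z)) (Arg z / 2)"
proof (rule csqrt_unique)
  show "(rcis (sqrt (cmod z)) (Arg z / 2))\<^sup>2 = z"
    by (simp add: DeMoivre2 rcis_cmod_Arg)
  have a: "-pi < Arg z" "Arg z \<le> pi" by (rule mpi_less_Arg, rule Arg_le_pi)
  show "0 < Re (rcis (sqrt (cmod z)) (Arg z / 2)) \<or>
    Re (rcis (sqrt (cmod z)) (Arg z / 2)) = 0 \<and> 0 \<le> Im (rcis (sqrt (cmod z)) (Arg z / 2))"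
  proof (cases "z = 0")
    case True then show ?thesis by simp
  next
    case False
    show ?thesis
    proof (cases "Arg z = pi")
      case True then show ?thesis by simp
    next
      case False2: False
      have "cos (Arg z / 2) > 0" using a False2 by (intro cos_gt_zero_pi) auto
      then show ?thesis using False by simp
    qed
  qed
qed

lemma sqrtD_eq: "sqrtD C1 z = csqrt z * csqrt (z - complex_of_real C1)"
proof -
  have P: "csqrt z * csqrt (z - complex_of_real C1) =
     rcis (sqrt (norm z) * sqrt (norm (z - C1))) (Arg z / 2 + Arg (z - C1) / 2)"
    by (simp add: csqrt_rcis rcis_mult)
  show ?thesis
  proof (cases "Im z < 0")
    case True
    then have "Arg z < 0" "Arg (z - C1) < 0" by (auto simp: Arg_neg_iff)
    then have "(arg02 z + arg02 (z - C1)) / 2 = (Arg z / 2 + Arg (z - C1) / 2) + 2*pi"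
      by (simp add: arg02_def)
    then have "cis ((arg02 z + arg02 (z - C1)) / 2) = cis (Arg z / 2 + Arg (z - C1) / 2)"
      by (metis cis_2pi cis_mult mult_1_right)
    then show ?thesis unfolding P sqrtD_def rcis_def
      by (simp add: real_sqrt_mult)
  next
    case False
    then have "Arg z \<ge> 0" "Arg (z - C1) \<ge> 0" by (auto simp: Arg_less_0)
    then have "(arg02 z + arg02 (z - C1)) / 2 = (Arg z / 2 + Arg (z - C1) / 2)"
      by (simp add: arg02_def)
    then show ?thesis unfolding P sqrtD_def rcis_def
      by (simp add: real_sqrt_mult add_divide_distrib)
  qed
qed


lemma csqrt_sign_aux:
  assumes "c\<^sup>2 = w" "Re c \<ge> 0"
  shows "Im w = 2 * (Re c * Im c)"
  using assms Im_power2[of c] by simp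

lemma Im_csqrt_pos: "Im w > 0 \<Longrightarrow> Im (csqrt w) > 0 \<and> Re (csqrt w) > 0"
proof -
  assume a: "Im w > 0"
  obtain c where c: "c = csqrt w" by blast
  have "c\<^sup>2 = w" "Re c \<ge> 0" unfolding c by (simp_all add: Re_csqrt del: csqrt.sel)
  then have "Im w = 2 * (Re c * Im c)" by (rule csqrt_sign_aux)
  with a have "Re c * Im c > 0" by linarith
  then have "Re c > 0 \<and> Im c > 0 \<or> Re c < 0 \<and> Im c < 0"
    by (simp add: zero_less_mult_iff)
  with \<open>Re c \<ge> 0\<close> show ?thesis unfolding c by linarith
qed

lemma Im_csqrt_neg: "Im w < 0 \<Longrightarrow> Im (csqrt w) < 0 \<and> Re (csqrt w) > 0"
proof -
  assume a: "Im w < 0"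
  obtain c where c: "c = csqrt w" by blast
  have "c\<^sup>2 = w" "Re c \<ge> 0" unfolding c by (simp_all add: Re_csqrt del: csqrt.sel)
  then have "Im w = 2 * (Re c * Im c)" by (rule csqrt_sign_aux)
  with a have "Re c * Im c < 0" by linarith
  then have "Re c > 0 \<and> Im c < 0 \<or> Re c < 0 \<and> Im c > 0"
    by (simp add: mult_less_0_iff)
  with \<open>Re c \<ge> 0\<close> show ?thesis unfolding c by linarith
qed

lemma Re_cnj_csqrt_pos:
  fixes C1 :: real
  assumes "C1 > 0" "z \<notin> complex_of_real ` {0..C1}"
  shows "Re (cnj (csqrt z) * csqrt (z - of_real C1)) > 0"
proof -
  consider "Im z > 0" | "Im z < 0" | "Im z = 0" "Re z > C1" | "Im z = 0" "Re z < 0"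
  proof -
    have "\<not> (Im z = 0 \<and> 0 \<le> Re z \<and> Re z \<le> C1)"
    proof
      assume h: "Im z = 0 \<and> 0 \<le> Re z \<and> Re z \<le> C1"
      then have "z = of_real (Re z)" by (simp add: complex_eq_iff)
      with h assms(2) show False by auto
    qed
    then show ?thesis using that by linarith
  qed
  then show ?thesis
  proof cases
    case 1
    then have "Im (z - C1) > 0" by simp
    with 1 show ?thesis using Im_csqrt_pos[of z] Im_csqrt_pos[of "z - C1"] Re_csqrt[of z] Re_csqrt[of "z-C1"]
      by (simp add: add_nonneg_pos)
  next
    case 2
    then have "Im (z - C1) < 0" by simp
    with 2 show ?thesis using Im_csqrt_neg[of z] Im_csqrt_neg[of "z - C1"] Re_csqrt[of z] Re_csqrt[of "z-C1"]
      by (simp add: add_nonneg_pos mult_neg_neg)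
  next
    case 3
    then have zeq: "of_real (Re z) = z" by (simp add: complex_eq_iff)
    have r: "Re z > 0" "Re z - C1 > 0" using 3 assms(1) by auto
    have "csqrt (of_real (Re z)) = of_real (sqrt (Re z))" using r by (simp add: csqrt_of_real)
    then have e1: "csqrt z = of_real (sqrt (Re z))" by (simp only: zeq)
    have "csqrt (of_real (Re z - C1)) = of_real (sqrt (Re z - C1))" using r by (simp add: csqrt_of_real)
    then have e2: "csqrt (z - C1) = of_real (sqrt (Re z - C1))" by (simp only: of_real_diff zeq)
    show ?thesis unfolding e1 e2 using r by simp
  next
    case 4
    then show ?thesis using assms(1) by simp
  qed
qed

definition sq :: "real \<Rightarrow> complex \<Rightarrow> complex" where
  "sq C1 z = csqrt z * csqrt (z - complex_of_real C1)"

lemma sq_square: "(sq C1 z)\<^sup>2 = z * (z - of_real C1)"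
  by (simp add: sq_def power_mult_distrib)


lemma ii_mult: "\<i> * a * (\<i> * b) = - (a * b :: complex)"
  by (metis complex_i_mult_minus mult.assoc mult.left_commute)

lemma sq_alt:
  assumes "\<not> (Im z = 0 \<and> Re z > 0)" "C1 \<ge> 0"
  shows "sq C1 z = - (csqrt (-z) * csqrt (of_real C1 - z))"
proof (cases "Im z < 0")
  case True
  have e1: "csqrt (- z) = \<i> * csqrt z" using csqrt_minus[of z] True by blast
  have "Im (z - C1) < 0" using True by simp
  then have "csqrt (- (z - C1)) = \<i> * csqrt (z - C1)" using csqrt_minus by blast
  then have e2: "csqrt (C1 - z) = \<i> * csqrt (z - C1)" by simp
  show ?thesis unfolding sq_def e1 e2 ii_mult by simp
next
  case False
  then have "Im (-z) < 0 \<or> (Im (-z) = 0 \<and> 0 \<le> Re (-z))" using assms by auto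
  then have "csqrt (- (-z)) = \<i> * csqrt (-z)" using csqrt_minus by blast
  then have e1: "csqrt z = \<i> * csqrt (-z)" by simp
  have "Im (C1 - z) < 0 \<or> (Im (C1 - z) = 0 \<and> 0 \<le> Re (C1 - z))" using assms False by auto
  then have "csqrt (- (C1 - z)) = \<i> * csqrt (C1 - z)" using csqrt_minus by blast
  then have e2: "csqrt (z - C1) = \<i> * csqrt (C1 - z)" by simp
  show ?thesis unfolding sq_def e1 e2 ii_mult by simp
qed

lemma sq_neg_real:
  assumes "x \<le> 0" "C1 \<ge> 0"
  shows "sq C1 (of_real x) = - of_real (sqrt (-x) * sqrt (C1 - x))"
proof -
  have "sq C1 (of_real x) = - (csqrt (of_real (-x)) * csqrt (of_real (C1 - x)))"
    using sq_alt[of "of_real x" C1] assms by simp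
  also have "\<dots> = - of_real (sqrt (-x) * sqrt (C1 - x))"
    using assms by (simp add: csqrt_of_real)
  finally show ?thesis .
qed

lemma sq_pos_real:
  assumes "x \<ge> C1" "C1 \<ge> 0"
  shows "sq C1 (of_real x) = of_real (sqrt x * sqrt (x - C1))"
proof -
  have "sq C1 (of_real x) = csqrt (of_real x) * csqrt (of_real (x - C1))"
    by (simp add: sq_def)
  also have "\<dots> = of_real (sqrt x * sqrt (x - C1))"
    using assms by (simp add: csqrt_of_real)
  finally show ?thesis .
qed

lemma Im_sq_pos: "Im z > 0 \<Longrightarrow> Im (sq C1 z) > 0"
proof -
  assume a: "Im z > 0"
  then have "Im (z - C1) > 0" by simp
  with a show ?thesis using Im_csqrt_pos[of z] Im_csqrt_pos[of "z - C1"]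
    by (simp add: sq_def add_pos_pos)
qed


declare csqrt.simps[simp del]

lemma Arctan_inv:
  assumes "Re k > 0"
  shows "Arctan k + Arctan (1 / k) = of_real (pi / 2)"
proof -
  define S where "S = {w::complex. Re w > 0}"
  have cS: "convex S" unfolding S_def by (rule convex_halfspace_Re_gt)
  have "\<exists>c. \<forall>x\<in>S. Arctan x + Arctan (1 / x) = c"
  proof (rule has_field_derivative_zero_constant[OF cS])
    fix x assume x: "x \<in> S"
    then have x0: "x \<noteq> 0" "Re x > 0" unfolding S_def by auto
    have r: "Re (1 / x) > 0" using x0
      by (auto simp: Re_divide intro!: divide_pos_pos add_pos_nonneg)
    have d1: "(Arctan has_field_derivative inverse (1 + x\<^sup>2)) (at x)"
      using x0 by (intro has_field_derivative_Arctan) auto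
    have d2: "(Arctan has_field_derivative inverse (1 + (1/x)\<^sup>2)) (at (1/x))"
      using r by (intro has_field_derivative_Arctan) auto
    have ne: "1 + x\<^sup>2 \<noteq> 0"
    proof
      assume "1 + x\<^sup>2 = 0"
      then have "x\<^sup>2 = \<i>\<^sup>2" by (simp add: add_eq_0_iff)
      then have "x = \<i> \<or> x = - \<i>" by (metis power2_eq_iff)
      with x0 show False by auto
    qed
    have d3: "((\<lambda>x. 1 / x) has_field_derivative (- 1 / x\<^sup>2)) (at x)"
      using x0 by (auto intro!: derivative_eq_intros simp: power2_eq_square)
    have "((\<lambda>x. Arctan x + Arctan (1 / x)) has_field_derivative
           (inverse (1 + x\<^sup>2) + inverse (1 + (1/x)\<^sup>2) * (- 1 / x\<^sup>2))) (at x)"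
      by (intro DERIV_add d1 DERIV_chain2[OF d2 d3])
    moreover have "inverse (1 + x\<^sup>2) + inverse (1 + (1/x)\<^sup>2) * (- 1 / x\<^sup>2) = 0"
    proof -
      have "inverse (1 + (1/x)\<^sup>2) * (- 1 / x\<^sup>2) = - inverse (x\<^sup>2 * (1 + (1/x)\<^sup>2))"
        by (simp add: field_simps)
      also have "x\<^sup>2 * (1 + (1/x)\<^sup>2) = 1 + x\<^sup>2"
        using x0 by (simp add: field_simps power2_eq_square)
      finally show ?thesis by simp
    qed
    ultimately show "((\<lambda>x. Arctan x + Arctan (1 / x)) has_field_derivative 0) (at x within S)"
      by (metis has_field_derivative_at_within)
  qed
  then obtain c where c: "\<And>x. x \<in> S \<Longrightarrow> Arctan x + Arctan (1 / x) = c" by blast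
  have "c = Arctan 1 + Arctan (1/1)" using c[of 1] by (simp add: S_def)
  also have "\<dots> = of_real (pi/2)"
    using Arctan_of_real[of 1] by (simp add: arctan_one mult.commute)
  finally show ?thesis using c[of k] assms by (simp add: S_def)
qed

lemma Arctan_real_chain:
  fixes k :: complex and h :: "real \<Rightarrow> real"
  assumes h: "(h has_real_derivative h') (at x within S)"
      and c: "Re (k * of_real (h x)) = 0 \<Longrightarrow> \<bar>Im (k * of_real (h x))\<bar> < 1"
  shows "((\<lambda>t. Arctan (k * of_real (h t))) has_vector_derivative
            (k * of_real h' * inverse (1 + (k * of_real (h x))\<^sup>2))) (at x within S)"
proof -
  have d1: "((\<lambda>t. k * of_real (h t)) has_vector_derivative (k * of_real h')) (at x within S)"
    by (intro has_vector_derivative_mult_right has_vector_derivative_of_real h)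
  have d2: "(Arctan has_field_derivative inverse (1 + (k * of_real (h x))\<^sup>2))
             (at (k * of_real (h x)) within (\<lambda>t. k * of_real (h t)) ` S)"
    using has_field_derivative_Arctan[OF c] by (rule has_field_derivative_at_within)
  show ?thesis using field_vector_diff_chain_within[OF d1 d2] by (simp add: o_def)
qed

lemma Arctan_cond:
  assumes "Re k > 0" "y \<ge> 0"
  shows "Re (k * of_real y) = 0 \<Longrightarrow> \<bar>Im (k * of_real y)\<bar> < 1"
  using assms by simp

lemma alg1:
  fixes k z s c w C :: complex
  assumes "s = k*z" "k^2*z = z - C" "c^2 + w^2 = 1" "c \<noteq> 0" "z \<noteq> 0" "k \<noteq> 0"
    "z - C * w^2 \<noteq> 0"
  shows "k * (1/c^2) * inverse (1 + (k*(w/c))^2) / s = 1/(z - C * w^2)"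
proof -
  have e: "z * (c^2 + k^2 * w^2) = z - C * w^2"
  proof -
    have "z * (c^2 + k^2 * w^2) = z * c^2 + (k^2*z) * w^2" by (simp add: algebra_simps)
    also have "\<dots> = z * (c^2 + w^2) - C * w^2" unfolding assms(2) by (simp add: algebra_simps)
    finally show ?thesis using assms(3) by simp
  qed
  then have ne: "c^2 + k^2 * w^2 \<noteq> 0" using assms(7) by auto
  have "1 + (k*(w/c))^2 = (c^2 + k^2 * w^2) / c^2"
    using assms(4) by (simp add: field_simps power2_eq_square)
  then have "k * (1/c^2) * inverse (1 + (k*(w/c))^2) / s = k / ((c^2 + k^2 * w^2) * (k * z))"
    using assms(1,4) ne by (simp add: field_simps)
  also have "\<dots> = k / (k * (z * (c^2 + k^2 * w^2)))"
    by (simp add: ac_simps)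
  also have "\<dots> = 1 / (z * (c^2 + k^2 * w^2))"
    using assms(6) by (rule nonzero_divide_mult_cancel_left)
  finally show ?thesis unfolding e .
qed

lemma alg2:
  fixes k z s c w C :: complex
  assumes "s = k*z" "k^2*z = z - C" "c^2 + w^2 = 1" "w \<noteq> 0" "z \<noteq> 0" "k \<noteq> 0"
    "z - C * w^2 \<noteq> 0"
  shows "- ((1/k) * (- (1/w^2)) * inverse (1 + ((1/k)*(c/w))^2) / s) = 1/(z - C * w^2)"
proof -
  have e: "z * (c^2 + k^2 * w^2) = z - C * w^2"
  proof -
    have "z * (c^2 + k^2 * w^2) = z * c^2 + (k^2*z) * w^2" by (simp add: algebra_simps)
    also have "\<dots> = z * (c^2 + w^2) - C * w^2" unfolding assms(2) by (simp add: algebra_simps)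
    finally show ?thesis using assms(3) by simp
  qed
  then have ne: "c^2 + k^2 * w^2 \<noteq> 0" using assms(7) by auto
  have "1 + ((1/k)*(c/w))^2 = (c^2 + k^2 * w^2) / (k^2 * w^2)"
    using assms(4,6) by (simp add: field_simps power2_eq_square)
  then have "- ((1/k) * (- (1/w^2)) * inverse (1 + ((1/k)*(c/w))^2) / s)
      = k / ((c^2 + k^2 * w^2) * (k * z))"
    using assms(1,4,6) ne by (simp add: field_simps power2_eq_square)
  also have "\<dots> = k / (k * (z * (c^2 + k^2 * w^2)))"
    by (simp add: ac_simps)
  also have "\<dots> = 1 / (z * (c^2 + k^2 * w^2))"
    using assms(6) by (rule nonzero_divide_mult_cancel_left)
  finally show ?thesis unfolding e .
qed


lemma notin_seg_ne0:
  assumes "C1 > 0" "z \<notin> complex_of_real ` {0..C1}"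
  shows "z \<noteq> 0" "z \<noteq> of_real C1" "\<And>x. 0 \<le> x \<Longrightarrow> x \<le> C1 \<Longrightarrow> z \<noteq> of_real x"
proof -
  show "z \<noteq> of_real x" if "0 \<le> x" "x \<le> C1" for x
    using assms that by auto
  then show "z \<noteq> 0" "z \<noteq> of_real C1" using assms(1) by (metis of_real_0 order_refl less_imp_le)+
qed

lemma k_props:
  assumes C1: "C1 > 0" and z: "z \<notin> complex_of_real ` {0..C1}"
  defines "k \<equiv> sq C1 z / z"
  shows "Re k > 0" "k\<^sup>2 * z = z - of_real C1" "sq C1 z = k * z" "k \<noteq> 0"
proof -
  have z0: "z \<noteq> 0" and zC: "z \<noteq> of_real C1" using notin_seg_ne0[OF C1 z] by auto
  show kz: "sq C1 z = k * z" using z0 by (simp add: k_def)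
  have "k\<^sup>2 * z = (sq C1 z)\<^sup>2 / z" using z0 by (simp add: k_def power2_eq_square)
  also have "\<dots> = z * (z - of_real C1) / z" by (simp only: sq_square)
  also have "\<dots> = z - of_real C1" using z0 by simp
  finally show k2: "k\<^sup>2 * z = z - of_real C1" .
  show "k \<noteq> 0" using k2 zC by auto
  define A where "A = csqrt z"
  define B where "B = csqrt (z - of_real C1)"
  have A2: "A\<^sup>2 = z" unfolding A_def by simp
  have A0: "A \<noteq> 0" using A2 z0 by auto
  have sqAB: "sq C1 z = A * B" by (simp add: sq_def A_def B_def)
  have "k = A * B / A\<^sup>2" unfolding k_def sqAB A2 ..
  then have "k = B / A" using A0 by (simp add: power2_eq_square)
  moreover have "Re (cnj A * B) > 0" unfolding A_def B_def by (rule Re_cnj_csqrt_pos[OF C1 z])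
  moreover have "(Re A)\<^sup>2 + (Im A)\<^sup>2 > 0" using A0 by (simp add: sum_power2_gt_zero_iff complex_eq_iff)
  ultimately show "Re k > 0" by (simp add: Re_divide algebra_simps power2_eq_square)
qed

lemma trig_integral:
  assumes C1: "C1 > 0" and z: "z \<notin> complex_of_real ` {0..C1}"
  shows "((\<lambda>t. 1 / (z - of_real (C1 * (sin t)\<^sup>2))) has_integral (of_real (pi/2) / sq C1 z)) {0..pi/2}"
proof -
  define s where "s = sq C1 z"
  define k where "k = s / z"
  have Rek: "Re k > 0" and k2: "k\<^sup>2 * z = z - of_real C1" and kz: "s = k * z" and k0: "k \<noteq> 0"
    using k_props[OF C1 z] unfolding k_def s_def by auto
  have z0: "z \<noteq> 0" using notin_seg_ne0[OF C1 z] by auto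
  have den: "z - of_real C1 * (of_real (sin t))\<^sup>2 \<noteq> 0" for t
  proof -
    have s1: "(sin t)\<^sup>2 \<le> 1" by (simp add: sin_squared_eq)
    have "0 \<le> C1 * (sin t)\<^sup>2" "C1 * (sin t)\<^sup>2 \<le> C1" using C1 s1 by (auto simp: mult_left_le)
    then have "z \<noteq> of_real (C1 * (sin t)\<^sup>2)" using notin_seg_ne0(3)[OF C1 z] by blast
    then show ?thesis by simp
  qed
  have cs: "(of_real (cos t) :: complex)\<^sup>2 + (of_real (sin t))\<^sup>2 = 1" for t
    by (simp flip: of_real_power of_real_add)
  have Rek': "Re (1/k) > 0" using Rek k0 by (auto simp: Re_divide intro!: divide_pos_pos add_pos_nonneg)
  let ?f = "\<lambda>t. 1 / (z - of_real (C1 * (sin t)\<^sup>2))"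
  define F1 where "F1 = (\<lambda>t. Arctan (k * of_real (tan t)) / s)"
  define F2 where "F2 = (\<lambda>t. - (Arctan ((1/k) * of_real (cot t)) / s))"
  have I1: "(?f has_integral (F1 (pi/4) - F1 0)) {0..pi/4}"
  proof (rule fundamental_theorem_of_calculus)
    show "0 \<le> pi/4" by simp
    fix t assume t: "t \<in> {0..pi/4}"
    have t': "0 \<le> t" "t \<le> pi/4" using t by auto
    have ct: "cos t > 0" by (intro cos_gt_zero_pi) (use t' pi_gt_zero in linarith)+
    have st: "sin t \<ge> 0" by (intro sin_ge_zero) (use t' pi_gt_zero in linarith)+
    have tt: "tan t \<ge> 0" using ct st by (simp add: tan_def)
    have dt: "(tan has_real_derivative inverse ((cos t)\<^sup>2)) (at t within {0..pi/4})"
      using DERIV_tan[of t] ct by (auto intro: has_field_derivative_at_within)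
    have "((\<lambda>t. Arctan (k * of_real (tan t))) has_vector_derivative
            (k * of_real (inverse ((cos t)\<^sup>2)) * inverse (1 + (k * of_real (tan t))\<^sup>2))) (at t within {0..pi/4})"
      by (rule Arctan_real_chain[OF dt Arctan_cond[OF Rek tt]])
    then have "(F1 has_vector_derivative
            (k * of_real (inverse ((cos t)\<^sup>2)) * inverse (1 + (k * of_real (tan t))\<^sup>2)) / s) (at t within {0..pi/4})"
      unfolding F1_def by (rule has_vector_derivative_divide)
    moreover have "(k * of_real (inverse ((cos t)\<^sup>2)) * inverse (1 + (k * of_real (tan t))\<^sup>2)) / s = ?f t"
    proof -
      have e1: "(of_real (inverse ((cos t)\<^sup>2)) :: complex) = 1 / (of_real (cos t))\<^sup>2"
        by (simp add: of_real_inverse divide_inverse)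
      have e2: "(of_real (tan t) :: complex) = of_real (sin t) / of_real (cos t)"
        by (simp add: tan_def)
      have e3: "(of_real (C1 * (sin t)\<^sup>2) :: complex) = of_real C1 * (of_real (sin t))\<^sup>2" by simp
      show ?thesis unfolding e1 e2 e3
        by (rule alg1[OF kz k2 cs _ z0 k0 den]) (use ct in simp)
    qed
    ultimately show "(F1 has_vector_derivative ?f t) (at t within {0..pi/4})" by simp
  qed
  have I2: "(?f has_integral (F2 (pi/2) - F2 (pi/4))) {pi/4..pi/2}"
  proof (rule fundamental_theorem_of_calculus)
    show "pi/4 \<le> pi/2" by simp
    fix t assume t: "t \<in> {pi/4..pi/2}"
    have t0: "t > 0" using t pi_gt_zero by (auto intro: less_le_trans[of 0 "pi/4"])
    have t': "pi/4 \<le> t" "t \<le> pi/2" using t by auto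
    have st: "sin t > 0" by (intro sin_gt_zero) (use t' t0 pi_gt_zero in linarith)+
    have ct: "cos t \<ge> 0" by (intro cos_ge_zero) (use t' t0 pi_gt_zero in linarith)+
    have tt: "cot t \<ge> 0" using ct st by (simp add: cot_def)
    have dt: "(cot has_real_derivative - inverse ((sin t)\<^sup>2)) (at t within {pi/4..pi/2})"
      using DERIV_cot[of t] st by (auto intro: has_field_derivative_at_within)
    have "((\<lambda>t. Arctan ((1/k) * of_real (cot t))) has_vector_derivative
            ((1/k) * of_real (- inverse ((sin t)\<^sup>2)) * inverse (1 + ((1/k) * of_real (cot t))\<^sup>2))) (at t within {pi/4..pi/2})"
      by (rule Arctan_real_chain[OF dt Arctan_cond[OF Rek' tt]])
    then have "(F2 has_vector_derivative
            - ((1/k) * of_real (- inverse ((sin t)\<^sup>2)) * inverse (1 + ((1/k) * of_real (cot t))\<^sup>2) / s)) (at t within {pi/4..pi/2})"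
      unfolding F2_def by (intro has_vector_derivative_minus has_vector_derivative_divide)
    moreover have "- ((1/k) * of_real (- inverse ((sin t)\<^sup>2)) * inverse (1 + ((1/k) * of_real (cot t))\<^sup>2) / s) = ?f t"
    proof -
      have e1: "(of_real (- inverse ((sin t)\<^sup>2)) :: complex) = - (1 / (of_real (sin t))\<^sup>2)"
        by (simp add: of_real_inverse divide_inverse)
      have e2: "(of_real (cot t) :: complex) = of_real (cos t) / of_real (sin t)"
        by (simp add: cot_def)
      have e3: "(of_real (C1 * (sin t)\<^sup>2) :: complex) = of_real C1 * (of_real (sin t))\<^sup>2" by simp
      show ?thesis unfolding e1 e2 e3
        by (rule alg2[OF kz k2 cs _ z0 k0 den]) (use st in simp)
    qed
    ultimately show "(F2 has_vector_derivative ?f t) (at t within {pi/4..pi/2})" by simp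
  qed
  have "(?f has_integral ((F1 (pi/4) - F1 0) + (F2 (pi/2) - F2 (pi/4)))) {0..pi/2}"
    by (rule has_integral_combine[OF _ _ I1 I2]) auto
  moreover have "(F1 (pi/4) - F1 0) + (F2 (pi/2) - F2 (pi/4)) = of_real (pi/2) / sq C1 z"
  proof -
    have cot4: "cot (pi/4) = (1::real)" by (simp add: cot_def cos_45 sin_45)
    have cot2: "cot (pi/2) = (0::real)" by (simp add: cot_def)
    have "(F1 (pi/4) - F1 0) + (F2 (pi/2) - F2 (pi/4)) = (Arctan k + Arctan (1/k)) / s"
      unfolding F1_def F2_def by (simp add: tan_45 cot4 cot2 add_divide_distrib)
    also have "\<dots> = of_real (pi/2) / sq C1 z" by (simp only: Arctan_inv[OF Rek] s_def)
    finally show ?thesis .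
  qed
  ultimately show ?thesis by simp
qed


lemma xp_facts:
  fixes C1 C2 :: real
  assumes C1: "C1 > 0" and C2: "C2 > 0"
  defines "xp \<equiv> xi_p C1 C2" and "\<Delta> \<equiv> sqrt (C1\<^sup>2 + 4 * C2\<^sup>2)"
  shows "\<Delta> > C1" "xp = (C1 + \<Delta>) / 2" "xp > C1" "C1 - xp < 0"
    "xp * (xp - C1) = C2\<^sup>2" "(C1 - xp) * ((C1 - xp) - C1) = C2\<^sup>2"
    "xp - (C1 - xp) = \<Delta>" "resD C1 C2 = 2 * C2\<^sup>2 / \<Delta>"
    "sq C1 (of_real xp) = of_real C2" "sq C1 (of_real (C1 - xp)) = - of_real C2"
proof -
  have D2: "\<Delta>\<^sup>2 = C1\<^sup>2 + 4 * C2\<^sup>2" unfolding \<Delta>_def by simp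
  have D0: "\<Delta> \<ge> 0" unfolding \<Delta>_def by simp
  show DC: "\<Delta> > C1"
  proof -
    have "C1\<^sup>2 < \<Delta>\<^sup>2" using D2 C2 by simp
    then show ?thesis using D0 C1 by (meson abs_le_square_iff linorder_not_le less_le_trans abs_ge_self power2_less_imp_less)
  qed
  show xpd: "xp = (C1 + \<Delta>) / 2" unfolding xp_def \<Delta>_def xi_p_def ..
  show "xp > C1" using xpd DC by simp
  show "C1 - xp < 0" using xpd DC C1 by simp
  show e1: "xp * (xp - C1) = C2\<^sup>2" unfolding xpd using D2
    by (simp add: field_simps power2_eq_square)
  show e2: "(C1 - xp) * ((C1 - xp) - C1) = C2\<^sup>2" using e1 by (simp add: algebra_simps)
  show "xp - (C1 - xp) = \<Delta>" unfolding xpd by simp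
  have sq1: "sqrt (xp * (xp - C1)) = C2" using e1 C2 by simp
  have "resD C1 C2 = 2 * C2 * C2 / (2 * xp - C1)"
    unfolding resD_def xp_def[symmetric] sq1 by simp
  moreover have "2 * xp - C1 = \<Delta>" using xpd by simp
  ultimately show "resD C1 C2 = 2 * C2\<^sup>2 / \<Delta>"
    by (simp add: power2_eq_square)
  have "sq C1 (of_real xp) = of_real (sqrt xp * sqrt (xp - C1))"
    using \<open>xp > C1\<close> C1 by (intro sq_pos_real) auto
  also have "\<dots> = of_real C2" using sq1 \<open>xp > C1\<close> C1 by (simp add: real_sqrt_mult)
  finally show "sq C1 (of_real xp) = of_real C2" .
  have sq2: "sqrt (- (C1 - xp) * (C1 - (C1 - xp))) = C2" using e2 C2
    by (simp add: algebra_simps)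
  have "sq C1 (of_real (C1 - xp)) = - of_real (sqrt (- (C1 - xp)) * sqrt (C1 - (C1 - xp)))"
    using \<open>C1 - xp < 0\<close> C1 by (intro sq_neg_real) auto
  also have "\<dots> = - of_real C2" using sq2 \<open>xp > C1\<close> C1
    by (simp add: real_sqrt_mult[symmetric] del: real_sqrt_mult)
  finally show "sq C1 (of_real (C1 - xp)) = - of_real C2" .
qed

lemma alg3:
  fixes q P M D C :: complex
  assumes "q\<^sup>2 = P*M + C\<^sup>2" "P \<noteq> 0" "M \<noteq> 0" "q \<noteq> 0" "D \<noteq> 0" "q \<noteq> C" "M - P = D"
  shows "C/q + C^3/(P*M*q) - C\<^sup>2/(D*P) - C\<^sup>2/(D*M) = C/(q - C) - 2*C\<^sup>2/(D*P)"
proof -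
  have PM: "P * M \<noteq> 0" using assms by simp
  have sC: "q + C \<noteq> 0"
  proof
    assume "q + C = 0" then have "q = -C" by (simp add: add_eq_0_iff)
    then have "P * M = 0" using assms(1) by (simp add: power2_eq_square)
    with PM show False by simp
  qed
  have sm: "q - C \<noteq> 0" using assms(6) by simp
  have a: "C/q + C^3/(P*M*q) = C * q / (P*M)"
  proof -
    have "C/q + C^3/(P*M*q) = C * (P*M + C\<^sup>2) / (P*M*q)"
      using PM assms(4) by (simp add: field_simps power2_eq_square power3_eq_cube)
    also have "\<dots> = C * q\<^sup>2 / (P*M*q)" using assms(1) by simp
    also have "\<dots> = C * q / (P*M)" using assms(4) by (simp add: power2_eq_square)
    finally show ?thesis .
  qed
  have b: "C/(q - C) = C * q / (P*M) + C\<^sup>2 / (P*M)"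
  proof -
    have "C/(q - C) = C * (q + C) / ((q - C) * (q + C))" using sC by simp
    also have "(q - C) * (q + C) = P * M" using assms(1) by (simp add: algebra_simps power2_eq_square)
    finally show ?thesis by (simp add: add_divide_distrib algebra_simps power2_eq_square)
  qed
  have c: "C\<^sup>2/(D*P) - C\<^sup>2/(D*M) = C\<^sup>2/(P*M)"
  proof -
    have "C\<^sup>2/(D*P) - C\<^sup>2/(D*M) = C\<^sup>2 * (M - P) / (D*P*M)"
      using assms(2,3,5) by (simp add: field_simps)
    also have "\<dots> = C\<^sup>2/(P*M)" using assms(2,3,5,7) by simp
    finally show ?thesis .
  qed
  show ?thesis unfolding b a c[symmetric] by (simp add: algebra_simps)
qed

lemma pf3:
  fixes a b x u v w :: complex
  assumes "a \<noteq> 0" "b \<noteq> 0" "x \<noteq> 0" "u \<noteq> 0" "v \<noteq> 0" "w \<noteq> 0"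
    "u = b - a" "v = x - a" "w = x - b"
  shows "1/(a * b * x) = 1/(u * v * a) - 1/(u * w * b) + 1/(v * w * x)"
  using assms(1-6) by (simp add: field_simps) (simp add: assms(7-9) algebra_simps)

lemma alg4:
  fixes Y X p m C :: complex
  assumes "X - Y \<noteq> 0" "p - Y \<noteq> 0" "m - Y \<noteq> 0" "X - p \<noteq> 0" "X - m \<noteq> 0" "m - p \<noteq> 0"
  shows "(1 - C\<^sup>2/((p - Y)*(Y - m)))/(X - Y) = 1/(X - Y)
    + C\<^sup>2 * (1/((m - p)*(X - p)*(p - Y)) - 1/((m - p)*(X - m)*(m - Y)) + 1/((X - p)*(X - m)*(X - Y)))"
proof -
  have pf: "1/((p - Y)*(m - Y)*(X - Y)) = 1/((m - p)*(X - p)*(p - Y)) - 1/((m - p)*(X - m)*(m - Y)) + 1/((X - p)*(X - m)*(X - Y))"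
    by (rule pf3) (use assms in simp_all)
  have e: "(p - Y)*(Y - m) = - ((p - Y)*(m - Y))" by (simp add: algebra_simps)
  have "(1 - C\<^sup>2/((p - Y)*(Y - m)))/(X - Y) = (1 + C\<^sup>2/((p - Y)*(m - Y)))/(X - Y)"
    unfolding e divide_minus_right by simp
  also have "\<dots> = 1/(X - Y) + C\<^sup>2 * (1/((p - Y)*(m - Y)*(X - Y)))"
    by (simp add: add_divide_distrib divide_divide_eq_left)
  finally have "(1 - C\<^sup>2/((p - Y)*(Y - m)))/(X - Y) = 1/(X - Y) + C\<^sup>2 * (1/((p - Y)*(m - Y)*(X - Y)))" .
  then show ?thesis unfolding pf .
qed


lemma psi_subst:
  fixes C1 C2 p t :: real
  assumes C1: "C1 > 0" and C2: "C2 > 0" and t: "0 \<le> t" "t \<le> pi/2"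
    and pm: "p * (C1 - p) = - C2\<^sup>2"
  defines "y \<equiv> C1 * (sin t)\<^sup>2"
  shows "2 * C1 * sin t * cos t * psiD C1 C2 y = 2 * C2 / pi * (1 - C2\<^sup>2 / ((p - y) * (y - (C1 - p))))"
proof -
  have st: "sin t \<ge> 0" by (intro sin_ge_zero) (use t pi_gt_zero in linarith)+
  have ct: "cos t \<ge> 0" by (intro cos_ge_zero) (use t pi_gt_zero in linarith)+
  have N: "y * (C1 - y) = (C1 * sin t * cos t)\<^sup>2"
  proof -
    have "C1 - y = C1 * (1 - (sin t)\<^sup>2)" unfolding y_def by (simp add: algebra_simps)
    also have "\<dots> = C1 * (cos t)\<^sup>2" by (simp add: cos_squared_eq)
    finally have "C1 - y = C1 * (cos t)\<^sup>2" .
    then show ?thesis by (simp add: y_def power_mult_distrib) (simp add: power2_eq_square)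
  qed
  have sq: "sqrt (y * (C1 - y)) = C1 * sin t * cos t" unfolding N using C1 st ct by simp
  have D: "(p - y) * (y - (C1 - p)) = C2\<^sup>2 + y * (C1 - y)"
    using pm by (simp add: algebra_simps power2_eq_square)
  have Dpos: "C2\<^sup>2 + y * (C1 - y) > 0" unfolding N using C2 by (simp add: add_pos_nonneg)
  have "2 * C1 * sin t * cos t * psiD C1 C2 y = 2 * C2 / pi * (y * (C1 - y) / (C2\<^sup>2 + y * (C1 - y)))"
    unfolding psiD_def sq using N by (simp add: field_simps power2_eq_square)
  also have "y * (C1 - y) / (C2\<^sup>2 + y * (C1 - y)) = 1 - C2\<^sup>2 / ((p - y) * (y - (C1 - p)))"
    unfolding D using Dpos by (simp add: field_simps)
  finally show ?thesis .
qed

lemma sin2_le1: "(sin x)\<^sup>2 \<le> (1::real)"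
  by (simp add: sin_squared_eq)

lemma y_range: "(C1::real) > 0 \<Longrightarrow> 0 \<le> C1 * (sin x)\<^sup>2 \<and> C1 * (sin x)\<^sup>2 \<le> C1"
  using sin2_le1[of x] by (simp add: mult_left_le)

lemma main_generic:
  fixes C1 C2 :: real and \<xi> :: complex
  assumes C1: "C1 > 0" and C2: "C2 > 0" and xi: "\<xi> \<notin> complex_of_real ` {0..C1}"
    and np: "\<xi> \<noteq> of_real (xi_p C1 C2)" and nm: "\<xi> \<noteq> of_real (C1 - xi_p C1 C2)"
  shows "((\<lambda>u. of_real (psiD C1 C2 u) / (\<xi> - of_real u)) has_integral
           (RD C1 C2 \<xi> - of_real (resD C1 C2) / (\<xi> - of_real (xi_p C1 C2)))) {0..C1}"
proof -
  define p where "p = xi_p C1 C2"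
  define m where "m = C1 - p"
  define \<Delta> where "\<Delta> = sqrt (C1\<^sup>2 + 4 * C2\<^sup>2)"
  note xf = xp_facts[OF C1 C2, folded p_def \<Delta>_def, folded m_def]
  have pC: "p > C1" and m0: "m < 0" and pp: "p * (p - C1) = C2\<^sup>2" and pmD: "p - m = \<Delta>"
    and rD: "resD C1 C2 = 2 * C2\<^sup>2 / \<Delta>" and sqp: "sq C1 (of_real p) = of_real C2"
    and sqm: "sq C1 (of_real m) = - of_real C2" and DC: "\<Delta> > C1"
    using xf by auto
  have pm: "p * (C1 - p) = - C2\<^sup>2" using pp by (simp add: algebra_simps)
  have pnot: "complex_of_real p \<notin> complex_of_real ` {0..C1}" using pC by auto
  have mnot: "complex_of_real m \<notin> complex_of_real ` {0..C1}" using m0 by auto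
  define s where "s = sq C1 \<xi>"
  define f where "f = (\<lambda>z t. 1 / (z - complex_of_real (C1 * (sin t)\<^sup>2)))"
  define K where "K = complex_of_real (2 * C2 / pi)"
  define P where "P = \<xi> - of_real p"
  define M where "M = \<xi> - of_real m"
  define D where "D = complex_of_real \<Delta>"
  define cp where "cp = 1 / ((of_real m - of_real p) * (\<xi> - of_real p) :: complex)"
  define cm where "cm = 1 / ((of_real m - of_real p) * (\<xi> - of_real m) :: complex)"
  define cx where "cx = 1 / ((\<xi> - of_real p) * (\<xi> - of_real m) :: complex)"
  have T1: "(f \<xi> has_integral of_real (pi/2) / s) {0..pi/2}"
    unfolding f_def s_def by (rule trig_integral[OF C1 xi])
  have T2: "(f (of_real p) has_integral of_real (pi/2) / of_real C2) {0..pi/2}"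
    unfolding f_def using trig_integral[OF C1 pnot] by (simp add: sqp)
  have T3: "(f (of_real m) has_integral of_real (pi/2) / (- of_real C2)) {0..pi/2}"
    unfolding f_def using trig_integral[OF C1 mnot] by (simp add: sqm)
  define V where "V = K * (of_real (pi/2) / s + (of_real C2)\<^sup>2 * (cp * (of_real (pi/2) / of_real C2)
        - cm * (of_real (pi/2) / (- of_real C2)) + cx * (of_real (pi/2) / s)))"
  have TT: "((\<lambda>t. K * (f \<xi> t + (of_real C2)\<^sup>2 * (cp * f (of_real p) t - cm * f (of_real m) t + cx * f \<xi> t)))
      has_integral V) {0..pi/2}"
    unfolding V_def
    by (intro has_integral_mult_right has_integral_add has_integral_diff T1 T2 T3)
  define y where "y = (\<lambda>t::real. C1 * (sin t)\<^sup>2)"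
  define Fu where "Fu = (\<lambda>u. complex_of_real (psiD C1 C2 u) / (\<xi> - of_real u))"
  have ne_xi: "\<xi> - of_real u \<noteq> 0" if "0 \<le> u" "u \<le> C1" for u
    using notin_seg_ne0(3)[OF C1 xi that] by simp
  have den: "pi * (C2\<^sup>2 + u * (C1 - u)) \<noteq> 0" if "u \<in> {0..C1}" for u
  proof -
    have "u * (C1 - u) \<ge> 0" using that by auto
    moreover have "C2\<^sup>2 > 0" using C2 by simp
    ultimately have "C2\<^sup>2 + u * (C1 - u) > 0" by linarith
    then show ?thesis by simp
  qed
  have Fcont: "continuous_on {0..C1} Fu"
    unfolding Fu_def psiD_def
    by (intro continuous_intros) (use den ne_xi in auto)
  have pointwise: "(2 * C1 * sin t * cos t) *\<^sub>R Fu (y t) =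
      K * (f \<xi> t + (of_real C2)\<^sup>2 * (cp * f (of_real p) t - cm * f (of_real m) t + cx * f \<xi> t))"
    if t: "t \<in> {0..pi/2}" for t
  proof -
    have t': "0 \<le> t" "t \<le> pi/2" using t by auto
    have y01: "0 \<le> y t" "y t \<le> C1" unfolding y_def using y_range[OF C1] by auto
    have real: "2 * C1 * sin t * cos t * psiD C1 C2 (y t) =
        2 * C2 / pi * (1 - C2\<^sup>2 / ((p - y t) * (y t - m)))"
      using psi_subst[OF C1 C2 t' pm] unfolding y_def m_def .
    define Y where "Y = complex_of_real (y t)"
    have "(2 * C1 * sin t * cos t) *\<^sub>R Fu (y t) =
        of_real (2 * C1 * sin t * cos t * psiD C1 C2 (y t)) / (\<xi> - Y)"
      unfolding Fu_def Y_def by (simp add: scaleR_conv_of_real)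
    also have "\<dots> = K * ((1 - (of_real C2)\<^sup>2 / ((of_real p - Y) * (Y - of_real m))) / (\<xi> - Y))"
      unfolding real K_def Y_def by simp
    also have "(1 - (of_real C2)\<^sup>2 / ((of_real p - Y) * (Y - of_real m))) / (\<xi> - Y) = 1/(\<xi> - Y)
      + (of_real C2)\<^sup>2 * (1/((of_real m - of_real p) * (\<xi> - of_real p) * (of_real p - Y))
          - 1/((of_real m - of_real p) * (\<xi> - of_real m) * (of_real m - Y))
          + 1/((\<xi> - of_real p) * (\<xi> - of_real m) * (\<xi> - Y)))"
    proof (rule alg4)
      show "\<xi> - Y \<noteq> 0" unfolding Y_def using ne_xi[OF y01] .
      show "of_real p - Y \<noteq> 0" unfolding Y_def using y01 pC by (simp flip: of_real_diff)
      show "of_real m - Y \<noteq> 0" unfolding Y_def using y01 m0 by (simp flip: of_real_diff)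
      show "\<xi> - of_real p \<noteq> 0" using np p_def by simp
      show "\<xi> - of_real m \<noteq> 0" using nm p_def m_def by simp
      show "of_real m - of_real p \<noteq> (0::complex)" using pC m0 C1 by (simp flip: of_real_diff)
    qed
    finally show ?thesis
      unfolding f_def cp_def cm_def cx_def Y_def y_def by (simp add: divide_divide_eq_left)
  qed
  have sub: "((\<lambda>t. (2 * C1 * sin t * cos t) *\<^sub>R Fu (y t)) has_integral integral {y 0..y (pi/2)} Fu) {0..pi/2}"
  proof (rule has_integral_substitution_strong[of "{}" 0 "pi/2" y 0 C1])
    show "y 0 \<le> y (pi/2)" unfolding y_def using C1 by simp
    show "y ` {0..pi/2} \<subseteq> {0..C1}" unfolding y_def using y_range[OF C1] by auto
    show "continuous_on {0..C1} Fu" by (rule Fcont)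
    show "continuous_on {0..pi/2} y" unfolding y_def by (intro continuous_intros)
    fix x assume "x \<in> {0..pi/2} - {}"
    show "(y has_real_derivative 2 * C1 * sin x * cos x) (at x within {0..pi/2})"
      unfolding y_def by (auto intro!: derivative_eq_intros simp: power2_eq_square)
  qed auto
  have y0: "y 0 = 0" and y1: "y (pi/2) = C1" unfolding y_def by auto
  have "((\<lambda>t. (2 * C1 * sin t * cos t) *\<^sub>R Fu (y t)) has_integral V) {0..pi/2}"
    by (rule has_integral_eq[OF _ TT]) (rule sym[OF pointwise])
  then have "integral {0..C1} Fu = V" using sub y0 y1 by (metis has_integral_unique)
  moreover have "Fu integrable_on {0..C1}"
  proof (rule integrable_continuous_interval)
    show "continuous_on {0..C1} Fu" by (rule Fcont)
  qed
  ultimately have FV: "(Fu has_integral V) {0..C1}" using has_integral_integrable_integral by blast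
  have z0: "\<xi> \<noteq> 0" "\<xi> \<noteq> of_real C1" using notin_seg_ne0[OF C1 xi] by auto
  have s2: "s\<^sup>2 = P * M + (of_real C2)\<^sup>2"
  proof -
    have "s\<^sup>2 = \<xi> * (\<xi> - of_real C1)" unfolding s_def by (rule sq_square)
    moreover have "P * M + (of_real C2)\<^sup>2 = \<xi> * (\<xi> - of_real C1)"
    proof -
      have "P * M = \<xi> * \<xi> - of_real (p + m) * \<xi> + of_real (p * m)"
        unfolding P_def M_def by (simp add: algebra_simps)
      moreover have "p + m = C1" "p * m = - C2\<^sup>2" using pm by (auto simp: m_def)
      ultimately have e1: "P * M = \<xi> * \<xi> - of_real C1 * \<xi> - (of_real C2)\<^sup>2" by simp
      show ?thesis unfolding e1 by (simp add: algebra_simps)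
    qed
    ultimately show ?thesis by simp
  qed
  have P0: "P \<noteq> 0" using np p_def P_def by simp
  have M0: "M \<noteq> 0" using nm p_def m_def M_def by simp
  have s0: "s \<noteq> 0" using z0 unfolding s_def using sq_square[of C1 \<xi>] by (metis mult_eq_0_iff power_zero_numeral right_minus_eq zero_power2)
  have D0: "D \<noteq> 0" using DC C1 unfolding D_def by simp
  have sC: "s \<noteq> of_real C2"
  proof
    assume "s = of_real C2"
    then have "P * M = 0" using s2 by simp
    with P0 M0 show False by simp
  qed
  have MPD: "M - P = D" unfolding M_def P_def D_def pmD[symmetric] by simp
  have A3: "of_real C2/s + (of_real C2)^3/(P*M * s) - (of_real C2)\<^sup>2/(D*P) - (of_real C2)\<^sup>2/(D*M)
      = of_real C2/(s - of_real C2) - 2*(of_real C2)\<^sup>2/(D*P)"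
    by (rule alg3[OF s2 P0 M0 s0 D0 sC MPD])
  have "2 * C2 / pi * (pi / 2) = C2" by simp
  then have KV: "K * of_real (pi/2) = of_real C2" unfolding K_def by (metis of_real_mult)
  have "V = of_real C2/s + (of_real C2)^3/(P*M * s) - (of_real C2)\<^sup>2/(D*P) - (of_real C2)\<^sup>2/(D*M)"
  proof -
    have eD: "of_real m - of_real p = - D" unfolding D_def pmD[symmetric] by simp
    have cp': "cp = - 1 / (D * P)" unfolding cp_def eD P_def by simp
    have cm': "cm = - 1 / (D * M)" unfolding cm_def eD M_def by simp
    have cx': "cx = 1 / (P * M)" unfolding cx_def P_def M_def ..
    have Cn: "complex_of_real C2 \<noteq> 0" using C2 by simp
    have "V = (K * of_real (pi/2)) * (1 / s + (of_real C2)\<^sup>2 * (cp / of_real C2 + cm / of_real C2 + cx / s))"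
      unfolding V_def by (simp add: algebra_simps)
    also have "\<dots> = of_real C2 * (1 / s + (of_real C2)\<^sup>2 * (cp / of_real C2 + cm / of_real C2 + cx / s))"
      unfolding KV ..
    also have "\<dots> = of_real C2 / s + (of_real C2)\<^sup>2 * cp + (of_real C2)\<^sup>2 * cm + (of_real C2)^3 * cx / s"
      using Cn s0 by (simp add: field_simps power2_eq_square power3_eq_cube)
    also have "\<dots> = of_real C2/s + (of_real C2)^3/(P*M * s) - (of_real C2)\<^sup>2/(D*P) - (of_real C2)\<^sup>2/(D*M)"
      unfolding cp' cm' cx' by (simp add: divide_divide_eq_left)
    finally show ?thesis .
  qed
  also have "\<dots> = RD C1 C2 \<xi> - of_real (resD C1 C2) / (\<xi> - of_real (xi_p C1 C2))"
    unfolding A3 RD_def sqrtD_eq rD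
    by (simp add: s_def sq_def D_def P_def p_def power2_eq_square)
  finally show ?thesis using FV unfolding Fu_def by simp
qed


lemma RD_sq: "RD C1 C2 = (\<lambda>z. of_real C2 / (sq C1 z - of_real C2))"
  by (rule ext) (simp add: RD_def sqrtD_eq sq_def)

lemma sq_eq_pm:
  fixes C1 C2 :: real
  assumes C1: "C1 > 0" and C2: "C2 > 0" and h: "(sq C1 z)\<^sup>2 = (of_real C2)\<^sup>2"
  shows "z = of_real (xi_p C1 C2) \<or> z = of_real (C1 - xi_p C1 C2)"
proof -
  define p where "p = xi_p C1 C2"
  have pp: "p * (p - C1) = C2\<^sup>2" using xp_facts(5)[OF C1 C2] unfolding p_def .
  have "(z - of_real p) * (z - of_real (C1 - p)) = z * (z - of_real C1) - of_real (p * (p - C1))"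
    by (simp add: algebra_simps)
  also have "\<dots> = (sq C1 z)\<^sup>2 - (of_real C2)\<^sup>2" unfolding pp sq_square by simp
  also have "\<dots> = 0" using h by simp
  finally show ?thesis unfolding p_def by auto
qed

lemma sq_ne_C2:
  fixes C1 C2 :: real
  assumes C1: "C1 > 0" and C2: "C2 > 0" and z: "z \<noteq> of_real (xi_p C1 C2)"
  shows "sq C1 z \<noteq> of_real C2"
proof
  assume h: "sq C1 z = of_real C2"
  then have "z = of_real (xi_p C1 C2) \<or> z = of_real (C1 - xi_p C1 C2)" by (intro sq_eq_pm[OF C1 C2]) simp
  with z have "z = of_real (C1 - xi_p C1 C2)" by simp
  then have "sq C1 z = - of_real C2" using xp_facts(10)[OF C1 C2] by simp
  with h C2 show False by simp
qed

lemma sq_ne_mC2: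
  fixes C1 C2 :: real
  assumes C1: "C1 > 0" and C2: "C2 > 0" and z: "z \<noteq> of_real (C1 - xi_p C1 C2)"
  shows "sq C1 z \<noteq> - of_real C2"
proof
  assume h: "sq C1 z = - of_real C2"
  then have "z = of_real (xi_p C1 C2) \<or> z = of_real (C1 - xi_p C1 C2)" by (intro sq_eq_pm[OF C1 C2]) simp
  with z have "z = of_real (xi_p C1 C2)" by simp
  then have "sq C1 z = of_real C2" using xp_facts(9)[OF C1 C2] by simp
  with h C2 show False by simp
qed

definition S1 :: "real \<Rightarrow> complex set" where
  "S1 C1 = {z. Im z < 0} \<union> {z. Im z > 0} \<union> {z. Re z > C1}"
definition S2 :: "complex set" where
  "S2 = {z. Im z < 0} \<union> {z. Im z > 0} \<union> {z. Re z < 0}"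

lemma open_S: "open (S1 C1)" "open S2"
  unfolding S1_def S2_def
  by (intro open_Un open_halfspace_Im_lt open_halfspace_Im_gt open_halfspace_Re_gt open_halfspace_Re_lt)+

lemma sq_holo1: "C1 > 0 \<Longrightarrow> sq C1 holomorphic_on S1 C1"
proof -
  assume C1: "C1 > 0"
  have e: "sq C1 = (\<lambda>z. csqrt z * csqrt (z - of_real C1))" by (rule ext) (simp add: sq_def)
  show ?thesis unfolding e
    by (intro holomorphic_intros) (use C1 in \<open>auto simp: S1_def complex_nonpos_Reals_iff\<close>)
qed

lemma sq_holo2: "C1 > 0 \<Longrightarrow> sq C1 holomorphic_on S2"
proof -
  assume C1: "C1 > 0"
  have "(\<lambda>z. - (csqrt (-z) * csqrt (of_real C1 - z))) holomorphic_on S2"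
    by (intro holomorphic_intros) (use C1 in \<open>auto simp: S2_def complex_nonpos_Reals_iff\<close>)
  then show ?thesis
    by (rule holomorphic_transform) (use C1 in \<open>auto simp: S2_def intro!: sq_alt[symmetric]\<close>)
qed

lemma sq_holo: "C1 > 0 \<Longrightarrow> sq C1 holomorphic_on (- complex_of_real ` {0..C1})"
proof -
  assume C1: "C1 > 0"
  have "sq C1 holomorphic_on (S1 C1 \<union> S2)"
    by (intro holomorphic_on_Un sq_holo1 sq_holo2 open_S C1)
  moreover have "- complex_of_real ` {0..C1} \<subseteq> S1 C1 \<union> S2"
  proof
    fix z assume z: "z \<in> - complex_of_real ` {0..C1}"
    show "z \<in> S1 C1 \<union> S2"
    proof (rule ccontr)
      assume "z \<notin> S1 C1 \<union> S2"
      then have "Im z = 0" "0 \<le> Re z" "Re z \<le> C1" unfolding S1_def S2_def by auto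
      then have "z = of_real (Re z)" "Re z \<in> {0..C1}" by (auto simp: complex_eq_iff)
      with z show False by blast
    qed
  qed
  ultimately show ?thesis by (rule holomorphic_on_subset)
qed

lemma Im_RD:
  fixes C1 C2 :: real
  assumes C2: "C2 > 0" and xi: "Im \<xi> > 0"
  shows "Im (- RD C1 C2 \<xi>) > 0"
proof -
  define w where "w = sq C1 \<xi> - of_real C2"
  have Iw: "Im w > 0" unfolding w_def using Im_sq_pos[OF xi] by simp
  have "Im (- RD C1 C2 \<xi>) = C2 * Im w / ((Re w)\<^sup>2 + (Im w)\<^sup>2)"
    unfolding RD_sq w_def[symmetric] by (simp add: Im_divide power2_eq_square)
  moreover have "(Re w)\<^sup>2 + (Im w)\<^sup>2 > 0" using Iw by (simp add: add_nonneg_pos)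
  ultimately show ?thesis using C2 Iw by simp
qed

lemma RD_analytic:
  fixes C1 C2 :: real
  assumes C1: "C1 > 0" and C2: "C2 > 0"
  shows "RD C1 C2 analytic_on (- (complex_of_real ` {0..C1} \<union> {complex_of_real (xi_p C1 C2)}))"
proof -
  let ?U = "- (complex_of_real ` {0..C1} \<union> {complex_of_real (xi_p C1 C2)})"
  have "compact (complex_of_real ` {0..C1})"
    by (intro compact_continuous_image continuous_intros compact_Icc)
  then have oU: "open ?U" by (intro open_Compl closed_Un compact_imp_closed) auto
  have "(\<lambda>z. of_real C2 / (sq C1 z - of_real C2)) holomorphic_on ?U"
  proof (intro holomorphic_intros)
    show "sq C1 holomorphic_on ?U" by (rule holomorphic_on_subset[OF sq_holo[OF C1]]) auto
    fix z assume "z \<in> ?U"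
    then show "sq C1 z - of_real C2 \<noteq> 0" using sq_ne_C2[OF C1 C2] by auto
  qed
  then show ?thesis unfolding RD_sq using analytic_on_open[OF oU] by blast
qed


lemma alg5:
  fixes s P M D C r :: complex
  assumes s2: "s\<^sup>2 = P * M + C\<^sup>2" and P0: "P \<noteq> 0" and M0: "M \<noteq> 0" and sC: "s \<noteq> C" and smC: "s \<noteq> - C"
    and MP: "M - P = D" and rD: "r * D = 2 * C\<^sup>2"
  shows "C / (s - C) = r / P + (C / (s + C) - r / M)"
proof -
  have n1: "s - C \<noteq> 0" using sC by simp
  have n2: "s + C \<noteq> 0" using smC by (simp add: eq_neg_iff_add_eq_0)
  have pr: "(s - C) * (s + C) = P * M" using s2 by (simp add: algebra_simps power2_eq_square)
  have a: "C / (s - C) - C / (s + C) = 2 * C\<^sup>2 / (P * M)"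
  proof -
    have "C / (s - C) - C / (s + C) = (C * (s + C) - C * (s - C)) / ((s - C) * (s + C))"
      using n1 n2 by (rule diff_frac_eq)
    also have "\<dots> = 2 * C\<^sup>2 / (P * M)" unfolding pr by (simp add: algebra_simps power2_eq_square)
    finally show ?thesis .
  qed
  have b: "r / P - r / M = 2 * C\<^sup>2 / (P * M)"
  proof -
    have "r / P - r / M = (r * M - r * P) / (P * M)" using P0 M0 by (rule diff_frac_eq)
    also have "r * M - r * P = r * D" unfolding MP[symmetric] by (simp add: algebra_simps)
    finally show ?thesis unfolding rD .
  qed
  from a b show ?thesis by (simp add: algebra_simps)
qed

lemma RD_pole:
  fixes C1 C2 :: real
  assumes C1: "C1 > 0" and C2: "C2 > 0"
  shows "simple_pole_res (RD C1 C2) (complex_of_real (xi_p C1 C2)) (complex_of_real (resD C1 C2))"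
proof -
  define p where "p = xi_p C1 C2"
  define m where "m = C1 - p"
  define \<Delta> where "\<Delta> = sqrt (C1\<^sup>2 + 4 * C2\<^sup>2)"
  define r where "r = resD C1 C2"
  note xf = xp_facts[OF C1 C2, folded p_def \<Delta>_def r_def, folded m_def]
  have pC: "p > C1" and m0: "m < 0" and pp: "p * (p - C1) = C2\<^sup>2" and pmD: "p - m = \<Delta>"
    and rD: "r = 2 * C2\<^sup>2 / \<Delta>" and DC: "\<Delta> > C1"
    using xf by auto
  have r0: "r \<noteq> 0" using rD C2 DC C1 by simp
  define e where "e = p - C1"
  have e0: "e > 0" using pC e_def by simp
  define g where "g = (\<lambda>w. of_real C2 / (sq C1 w + of_real C2) - of_real r / (w - of_real m))"
  have Re_ball: "Re w > C1" if "w \<in> ball (complex_of_real p) e" for w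
  proof -
    have "\<bar>Re w - p\<bar> \<le> norm (w - of_real p)" using abs_Re_le_cmod[of "w - of_real p"] by simp
    also have "\<dots> < e" using that by (simp add: dist_norm norm_minus_commute)
    finally show ?thesis unfolding e_def by linarith
  qed
  have wm: "w \<noteq> of_real m" if "w \<in> ball (complex_of_real p) e" for w
    using Re_ball[OF that] m0 C1 by auto
  have holo: "g holomorphic_on ball (complex_of_real p) e"
    unfolding g_def
  proof (intro holomorphic_intros)
    have "ball (complex_of_real p) e \<subseteq> S1 C1" using Re_ball unfolding S1_def by auto
    then show "sq C1 holomorphic_on ball (complex_of_real p) e" using sq_holo1[OF C1] by (rule holomorphic_on_subset[rotated])
    fix w assume w: "w \<in> ball (complex_of_real p) e"
    show "sq C1 w + of_real C2 \<noteq> 0"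
      using sq_ne_mC2[OF C1 C2, of w] wm[OF w] unfolding m_def p_def by (auto simp: add_eq_0_iff)
    show "w - of_real m \<noteq> 0" using wm[OF w] by simp
  qed
  have eq: "RD C1 C2 w = of_real r / (w - of_real p) + g w" if w: "w \<in> ball (complex_of_real p) e - {of_real p}" for w
  proof -
    have wb: "w \<in> ball (complex_of_real p) e" and wp: "w \<noteq> of_real p" using w by auto
    have s2: "(sq C1 w)\<^sup>2 = (w - of_real p) * (w - of_real m) + (of_real C2)\<^sup>2"
    proof -
      have "(w - of_real p) * (w - of_real m) + (of_real C2)\<^sup>2 = w * w - of_real (p + m) * w + of_real (p * m) + (of_real C2)\<^sup>2"
        by (simp add: algebra_simps)
      moreover have "p + m = C1" "p * m = - C2\<^sup>2" using pp by (auto simp: m_def algebra_simps)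
      ultimately have "(w - of_real p) * (w - of_real m) + (of_real C2)\<^sup>2 = w * w - of_real C1 * w"
        by simp
      then show ?thesis by (simp add: sq_square algebra_simps)
    qed
    have "of_real C2 / (sq C1 w - of_real C2) = of_real r / (w - of_real p) + (of_real C2 / (sq C1 w + of_real C2) - of_real r / (w - of_real m))"
    proof (rule alg5[OF s2])
      show "w - of_real p \<noteq> 0" using wp by simp
      show "w - of_real m \<noteq> 0" using wm[OF wb] by simp
      show "sq C1 w \<noteq> of_real C2" using sq_ne_C2[OF C1 C2] wp unfolding p_def by auto
      show "sq C1 w \<noteq> - of_real C2" using sq_ne_mC2[OF C1 C2] wm[OF wb] unfolding m_def p_def by auto
      show "(w - of_real m) - (w - of_real p) = of_real \<Delta>" unfolding pmD[symmetric] by simp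
      have "r * \<Delta> = 2 * C2\<^sup>2" using rD DC C1 by simp
      then show "of_real r * of_real \<Delta> = 2 * (of_real C2 :: complex)\<^sup>2" by (metis of_real_mult of_real_numeral of_real_power)
    qed
    then show ?thesis unfolding RD_sq g_def by simp
  qed
  have "\<exists>e>0. \<exists>g. g holomorphic_on ball (complex_of_real p) e \<and>
        (\<forall>w\<in>ball (complex_of_real p) e - {complex_of_real p}. RD C1 C2 w = complex_of_real r / (w - complex_of_real p) + g w)"
    using e0 holo eq by blast
  then show ?thesis unfolding simple_pole_res_def p_def[symmetric] r_def[symmetric]
    using r0 by simp
qed


definition RR :: "real \<Rightarrow> real \<Rightarrow> real \<Rightarrow> real" where
  "RR C1 C2 x = C2 / (- sqrt (-x) * sqrt (C1 - x) - C2) - resD C1 C2 / (x - xi_p C1 C2)"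

lemma RR_eq:
  fixes C1 C2 x :: real
  assumes C1: "C1 > 0" and x: "x \<le> 0"
  shows "RD C1 C2 (of_real x) - of_real (resD C1 C2) / (of_real x - of_real (xi_p C1 C2)) = of_real (RR C1 C2 x)"
  unfolding RD_sq RR_def using sq_neg_real[OF x, of C1] C1 by simp

lemma real_int:
  fixes C1 C2 x :: real
  assumes C1: "C1 > 0" and C2: "C2 > 0" and x: "x < 0" and xm: "x \<noteq> C1 - xi_p C1 C2"
  shows "((\<lambda>u. psiD C1 C2 u / (x - u)) has_integral RR C1 C2 x) {0..C1}"
proof -
  have xp: "xi_p C1 C2 > C1" using xp_facts(3)[OF C1 C2] .
  have "((\<lambda>u. of_real (psiD C1 C2 u) / (of_real x - of_real u)) has_integral
           (RD C1 C2 (of_real x) - of_real (resD C1 C2) / (of_real x - of_real (xi_p C1 C2)))) {0..C1}"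
  proof (rule main_generic[OF C1 C2])
    show "complex_of_real x \<notin> complex_of_real ` {0..C1}" using x by auto
    show "complex_of_real x \<noteq> complex_of_real (xi_p C1 C2)" using x xp C1 by simp
    show "complex_of_real x \<noteq> complex_of_real (C1 - xi_p C1 C2)" using xm by (simp only: of_real_eq_iff) simp
  qed
  then have "((\<lambda>u. complex_of_real (psiD C1 C2 u / (x - u))) has_integral complex_of_real (RR C1 C2 x)) {0..C1}"
    unfolding RR_eq[OF C1 less_imp_le[OF x]] by simp
  from has_integral_linear[OF this bounded_linear_Re] show ?thesis by (simp add: o_def)
qed

lemma psiD_nonneg: "C2 > 0 \<Longrightarrow> 0 \<le> u \<Longrightarrow> u \<le> C1 \<Longrightarrow> psiD C1 C2 u \<ge> 0"
  unfolding psiD_def by (intro divide_nonneg_pos mult_nonneg_nonneg mult_pos_pos add_pos_nonneg) auto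

lemma lim_int:
  fixes C1 C2 x0 :: real and xs :: "nat \<Rightarrow> real"
  assumes C1: "C1 > 0" and C2: "C2 > 0" and x0: "x0 \<le> 0"
    and xs0: "\<And>n. xs n < 0" and xsm: "\<And>n. xs n \<noteq> C1 - xi_p C1 C2"
    and mono: "\<And>n. xs n \<le> xs (Suc n)" and lim: "xs \<longlonglongrightarrow> x0"
  shows "((\<lambda>u. psiD C1 C2 u / (u - x0)) has_integral - RR C1 C2 x0) {0..C1}"
proof -
  define f where "f = (\<lambda>n u. psiD C1 C2 u / (u - xs n))"
  have intf: "(f n has_integral - RR C1 C2 (xs n)) {0..C1}" for n
  proof -
    have "((\<lambda>u. - (psiD C1 C2 u / (xs n - u))) has_integral - RR C1 C2 (xs n)) {0..C1}"
      by (rule has_integral_neg[OF real_int[OF C1 C2 xs0 xsm]])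
    moreover have "- (psiD C1 C2 u / (xs n - u)) = f n u" for u
      unfolding f_def by (simp add: minus_divide_right)
    ultimately show ?thesis by simp
  qed
  have xp: "xi_p C1 C2 > C1" using xp_facts(3)[OF C1 C2] .
  have den1: "- sqrt (- x0) * sqrt (C1 - x0) - C2 \<noteq> 0"
  proof -
    have "sqrt (- x0) * sqrt (C1 - x0) \<ge> 0" using x0 C1 by simp
    then show ?thesis using C2 by linarith
  qed
  have den2: "x0 - xi_p C1 C2 \<noteq> 0" using x0 xp C1 by simp
  have RRlim: "(\<lambda>n. RR C1 C2 (xs n)) \<longlonglongrightarrow> RR C1 C2 x0"
    unfolding RR_def by (intro tendsto_intros lim den1 den2)
  have "g integrable_on {0..C1} \<and> (\<lambda>k. integral {0..C1} (f k)) \<longlonglongrightarrow> integral {0..C1} g"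
    if g_def: "g = (\<lambda>u. psiD C1 C2 u / (u - x0))" for g
  proof (rule monotone_convergence_increasing)
    show "f k integrable_on {0..C1}" for k using intf by blast
    show "f k x \<le> f (Suc k) x" if "x \<in> {0..C1}" for k x
      unfolding f_def
    proof (rule divide_left_mono)
      show "x - xs (Suc k) \<le> x - xs k" using mono[of k] by simp
      show "0 \<le> psiD C1 C2 x" using psiD_nonneg[OF C2] that by auto
      show "0 < (x - xs k) * (x - xs (Suc k))" using xs0[of k] xs0[of "Suc k"] that by auto
    qed
    show "(\<lambda>k. f k x) \<longlonglongrightarrow> g x" if "x \<in> {0..C1}" for x
    proof (cases "x - x0 = 0")
      case False
      then show ?thesis unfolding f_def g_def by (intro tendsto_intros lim False)
    next
      case True
      then have "x = 0" using that x0 by auto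
      then have "psiD C1 C2 x = 0" by (simp add: psiD_def)
      then show ?thesis unfolding f_def g_def by simp
    qed
    have "bounded (range (\<lambda>k. - RR C1 C2 (xs k)))"
      by (rule convergent_imp_bounded[OF tendsto_minus[OF RRlim]])
    moreover have "integral {0..C1} (f k) = - RR C1 C2 (xs k)" for k using intf by blast
    ultimately show "bounded (range (\<lambda>k. integral {0..C1} (f k)))" by simp
  qed
  then have gi: "(\<lambda>u. psiD C1 C2 u / (u - x0)) integrable_on {0..C1}"
    and gl: "(\<lambda>k. integral {0..C1} (f k)) \<longlonglongrightarrow> integral {0..C1} (\<lambda>u. psiD C1 C2 u / (u - x0))"
    by auto
  have "(\<lambda>k. integral {0..C1} (f k)) \<longlonglongrightarrow> - RR C1 C2 x0"
  proof -
    have "integral {0..C1} (f k) = - RR C1 C2 (xs k)" for k using intf by blast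
    then show ?thesis by (simp add: tendsto_minus RRlim)
  qed
  with gl have "integral {0..C1} (\<lambda>u. psiD C1 C2 u / (u - x0)) = - RR C1 C2 x0"
    by (rule LIMSEQ_unique)
  with gi show ?thesis using has_integral_integrable_integral by blast
qed


lemma xm_case:
  fixes C1 C2 :: real
  assumes C1: "C1 > 0" and C2: "C2 > 0"
  shows "((\<lambda>u. complex_of_real (psiD C1 C2 u) / (complex_of_real (C1 - xi_p C1 C2) - complex_of_real u)) has_integral
           (RD C1 C2 (complex_of_real (C1 - xi_p C1 C2)) - complex_of_real (resD C1 C2) / (complex_of_real (C1 - xi_p C1 C2) - complex_of_real (xi_p C1 C2)))) {0..C1}"
proof -
  define m where "m = C1 - xi_p C1 C2"
  have m0: "m < 0" using xp_facts(4)[OF C1 C2] unfolding m_def .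
  define xs where "xs = (\<lambda>n. m - inverse (real (Suc n)))"
  have "((\<lambda>u. psiD C1 C2 u / (u - m)) has_integral - RR C1 C2 m) {0..C1}"
  proof (rule lim_int[OF C1 C2 less_imp_le[OF m0]])
    show "xs n < 0" for n
    proof -
      have "inverse (real (Suc n)) > 0" by simp
      then show ?thesis unfolding xs_def using m0 by linarith
    qed
    show "xs n \<noteq> C1 - xi_p C1 C2" for n unfolding xs_def m_def by simp
    show "xs n \<le> xs (Suc n)" for n unfolding xs_def by (simp add: field_simps)
    have "(\<lambda>n. m - inverse (real (Suc n))) \<longlonglongrightarrow> m - 0"
      by (intro tendsto_intros LIMSEQ_inverse_real_of_nat)
    then show "xs \<longlonglongrightarrow> m" unfolding xs_def by simp
  qed
  from has_integral_neg[OF this]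
  have R0: "((\<lambda>u. - (psiD C1 C2 u / (u - m))) has_integral RR C1 C2 m) {0..C1}" by simp
  have "- (psiD C1 C2 u / (u - m)) = psiD C1 C2 u / (m - u)" for u
    by (simp add: minus_divide_right)
  with R0 have R: "((\<lambda>u. psiD C1 C2 u / (m - u)) has_integral RR C1 C2 m) {0..C1}" by simp
  have "((\<lambda>u. complex_of_real (psiD C1 C2 u / (m - u))) has_integral complex_of_real (RR C1 C2 m)) {0..C1}"
    by (rule has_integral_of_real[OF R])
  then have "((\<lambda>u. complex_of_real (psiD C1 C2 u) / (complex_of_real m - complex_of_real u)) has_integral complex_of_real (RR C1 C2 m)) {0..C1}"
    by simp
  then show ?thesis unfolding m_def[symmetric] RR_eq[OF C1 less_imp_le[OF m0], symmetric] .
qed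

lemma zero_case:
  fixes C1 C2 :: real
  assumes C1: "C1 > 0" and C2: "C2 > 0"
  shows "((\<lambda>u. psiD C1 C2 u / u) has_integral (1 - resD C1 C2 / xi_p C1 C2)) {0..C1}"
proof -
  define m where "m = C1 - xi_p C1 C2"
  have m0: "m < 0" using xp_facts(4)[OF C1 C2] unfolding m_def .
  have xp: "xi_p C1 C2 > C1" using xp_facts(3)[OF C1 C2] .
  define \<delta> where "\<delta> = - m / 2"
  have d0: "\<delta> > 0" using m0 by (simp add: \<delta>_def)
  define xs where "xs = (\<lambda>n. - \<delta> * inverse (real (Suc n)))"
  have "((\<lambda>u. psiD C1 C2 u / (u - 0)) has_integral - RR C1 C2 0) {0..C1}"
  proof (rule lim_int[OF C1 C2])
    show "xs n < 0" for n unfolding xs_def using d0 by simp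
    show "xs n \<noteq> C1 - xi_p C1 C2" for n
    proof -
      have "inverse (real (Suc n)) \<le> 1" by (simp add: inverse_le_1_iff)
      then have "\<delta> * inverse (real (Suc n)) \<le> \<delta>" using d0 by (simp add: mult_left_le)
      then have "xs n \<ge> - \<delta>" unfolding xs_def by simp
      moreover have "- \<delta> > m" using m0 by (simp add: \<delta>_def)
      ultimately show ?thesis unfolding m_def[symmetric] by auto
    qed
    show "xs n \<le> xs (Suc n)" for n unfolding xs_def using d0 by (simp add: field_simps)
    have "(\<lambda>n. - \<delta> * inverse (real (Suc n))) \<longlonglongrightarrow> - \<delta> * 0"
      by (intro tendsto_intros LIMSEQ_inverse_real_of_nat)
    then show "xs \<longlonglongrightarrow> 0" unfolding xs_def by simp
  qed simp
  moreover have "- RR C1 C2 0 = 1 - resD C1 C2 / xi_p C1 C2"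
    unfolding RR_def using C2 by simp
  ultimately show ?thesis by simp
qed

theorem mainTheorem2:
  fixes C1 C2 :: real
  assumes "C1 > 0" and "C2 > 0"
  shows "RD C1 C2 analytic_on
           (- (complex_of_real ` {0..C1} \<union> {complex_of_real (xi_p C1 C2)}))
       \<and> simple_pole_res (RD C1 C2) (complex_of_real (xi_p C1 C2)) (complex_of_real (resD C1 C2))
       \<and> (\<forall>\<xi>. Im \<xi> > 0 \<longrightarrow> Im (- RD C1 C2 \<xi>) > 0)
       \<and> (\<forall>\<xi>. \<xi> \<notin> complex_of_real ` {0..xi_p C1 C2} \<longrightarrow>
            ((\<lambda>u. complex_of_real (psiD C1 C2 u) / (\<xi> - complex_of_real u)) has_integral
               (RD C1 C2 \<xi> - complex_of_real (resD C1 C2) / (\<xi> - complex_of_real (xi_p C1 C2)))) {0..C1})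
       \<and> ((\<lambda>u. psiD C1 C2 u / u) has_integral (1 - resD C1 C2 / xi_p C1 C2)) {0..C1}"
proof (intro conjI allI impI)
  note C1 = assms(1) and C2 = assms(2)
  show "RD C1 C2 analytic_on (- (complex_of_real ` {0..C1} \<union> {complex_of_real (xi_p C1 C2)}))"
    by (rule RD_analytic[OF C1 C2])
  show "simple_pole_res (RD C1 C2) (complex_of_real (xi_p C1 C2)) (complex_of_real (resD C1 C2))"
    by (rule RD_pole[OF C1 C2])
  show "Im (- RD C1 C2 \<xi>) > 0" if "Im \<xi> > 0" for \<xi> by (rule Im_RD[OF C2 that])
  show "((\<lambda>u. psiD C1 C2 u / u) has_integral (1 - resD C1 C2 / xi_p C1 C2)) {0..C1}"
    by (rule zero_case[OF C1 C2])
  fix \<xi> assume xi: "\<xi> \<notin> complex_of_real ` {0..xi_p C1 C2}"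
  have xp: "xi_p C1 C2 > C1" using xp_facts(3)[OF C1 C2] .
  show "((\<lambda>u. complex_of_real (psiD C1 C2 u) / (\<xi> - complex_of_real u)) has_integral
               (RD C1 C2 \<xi> - complex_of_real (resD C1 C2) / (\<xi> - complex_of_real (xi_p C1 C2)))) {0..C1}"
  proof (cases "\<xi> = complex_of_real (C1 - xi_p C1 C2)")
    case True
    then show ?thesis using xm_case[OF C1 C2] by simp
  next
    case False
    show ?thesis
    proof (rule main_generic[OF C1 C2 _ _ False])
      show "\<xi> \<notin> complex_of_real ` {0..C1}" using xi xp by auto
      show "\<xi> \<noteq> complex_of_real (xi_p C1 C2)" using xi xp C1 by auto
    qed
  qed
qed


end
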